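(* Consider the following two-bidder auction. A single good has common value $v$ with CDF $F_v$, density $f_v$, support $\mathbb{R}_+$ and finite mean, and $\mathbb{E}[v]>L\ge 0$. Alice submits a bid knowing only $F_v$; then $v$ is realized and Bob, observing $v$ but not Alice's bid, submits a bid. The highest bid wins and pays its bid (payoff $v$ minus bid) unless it is strictly below the limit price $L$, in which case the good is unsold. If the bids tie, Bob wins; if Bob's bid equals $L$ he can win; a winning bid of Alice equal exactly to $L$ results in no sale. Suppose, in an equilibrium, Bob's bid as a function of $v$ is given by a non-decreasing function $\beta_L$, and let $\beta_L^{-1}(b)=\inf\{v:\beta_L(v)\ge b\}$ be its pseudo-inverse. Then every bid $b_A>L$ of Alice (in the support of her equilibrium strategy) satisfies $$b_A=\mathbb{E}\left[v\mid v<\beta_L^{-1}(b_A)\right].$$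
   Context: Bidders are risk neutral; equilibrium means perfect Bayesian Nash equilibrium. *)

theory Defs
  imports "HOL-Probability.Probability"
begin

definition val_dist :: "(real \<Rightarrow> real) \<Rightarrow> real measure" where
  "val_dist f = density lborel (\<lambda>v. ennreal (f v))"

text \<open>Pseudo-inverse of Bob's bid function (over the support v >= 0);
  the infimum of the empty set is +infinity.\<close>
definition pinv :: "(real \<Rightarrow> real) \<Rightarrow> real \<Rightarrow> ereal" where
  "pinv \<beta> b = Inf {ereal v | v. 0 \<le> v \<and> \<beta> v \<ge> b}"

definition cond_mean_below :: "real measure \<Rightarrow> ereal \<Rightarrow> real" where
  "cond_mean_below V t =
     (\<integral>v. v * indicator {v. ereal v < t} v \<partial>V) / measure V {v. ereal v < t}"

definition alice_payoff :: "real measure \<Rightarrow> real \<Rightarrow> (real \<Rightarrow> real) \<Rightarrow> real \<Rightarrow> real" where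
  "alice_payoff V L \<beta> b =
     (if b > L then (\<integral>v. (v - b) * indicator {v. 0 \<le> v \<and> \<beta> v < b} v \<partial>V) else 0)"

text \<open>Bob's expected payoff with value v and bid c, against Alice's mixed
  strategy G (a probability measure on bids). Bob wins iff c >= Alice's bid
  and c >= L.\<close>
definition bob_payoff :: "real measure \<Rightarrow> real \<Rightarrow> real \<Rightarrow> real \<Rightarrow> real" where
  "bob_payoff G L v c = (if c \<ge> L then (v - c) * measure G {..c} else 0)"

definition is_equilibrium :: "real measure \<Rightarrow> real measure \<Rightarrow> real \<Rightarrow> (real \<Rightarrow> real) \<Rightarrow> bool" where
  "is_equilibrium V G L \<beta> \<longleftrightarrow>
     (\<forall>v\<ge>0. \<forall>c. bob_payoff G L v c \<le> bob_payoff G L v (\<beta> v)) \<and>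
     (AE b in G. \<forall>b'. alice_payoff V L \<beta> b' \<le> alice_payoff V L \<beta> b)"

definition in_support :: "real measure \<Rightarrow> real \<Rightarrow> bool" where
  "in_support G b \<longleftrightarrow> (\<forall>e>0. measure G {b - e <..< b + e} > 0)"

end

theory Submission
  imports Defs
begin

locale auc =
  fixes f :: "real \<Rightarrow> real" and L :: real and \<beta> :: "real \<Rightarrow> real" and G :: "real measure"
  assumes f_meas: "f \<in> borel_measurable borel"
    and f_nonneg: "\<forall>v. 0 \<le> f v"
    and f_prob: "prob_space (val_dist f)"
    and f_supp_neg: "\<forall>v<0. f v = 0"
    and f_supp_pos: "\<forall>v>0. 0 < f v"
    and finite_mean: "integrable (val_dist f) (\<lambda>v. v)"
    and L_nonneg: "0 \<le> L"
    and G_prob: "prob_space G"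
    and G_sets: "sets G = sets borel"
    and \<beta>_mono: "mono_on {0..} \<beta>"
    and eq: "is_equilibrium (val_dist f) G L \<beta>"
begin

abbreviation "V \<equiv> val_dist f"
definition "S b = {v. 0 \<le> v \<and> \<beta> v < b}"
definition "Sp b = {v. 0 \<le> v \<and> \<beta> v \<le> b}"
abbreviation "P \<equiv> alice_payoff V L \<beta>"
definition "best b \<longleftrightarrow> (\<forall>b'. P b' \<le> P b)"
abbreviation "g c \<equiv> measure G {..c}"

lemma sets_V[simp, measurable_cong]: "sets V = sets borel"
  by (simp add: val_dist_def)

lemma space_V[simp]: "space V = UNIV"
  by (simp add: val_dist_def)

lemma sets_G[measurable_cong]: "sets G = sets borel" using G_sets .

lemma S_meas[measurable]: "S b \<in> sets borel"
proof (rule real_interval_borel_measurable)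
  show "is_interval (S b)" unfolding is_interval_1 S_def
    using \<beta>_mono by (auto simp: mono_on_def) (smt (verit))
qed

lemma Sp_meas[measurable]: "Sp b \<in> sets borel"
proof (rule real_interval_borel_measurable)
  show "is_interval (Sp b)" unfolding is_interval_1 Sp_def
    using \<beta>_mono by (auto simp: mono_on_def) (smt (verit))
qed

lemma Vprob: "prob_space V" using f_prob .
lemma Gprob: "prob_space G" using G_prob .

lemma int_lin: "integrable V (\<lambda>v. (v - b) * indicator A v)" if "A \<in> sets borel" for A b
proof -
  have "integrable V (\<lambda>v. v - b)"
    using Bochner_Integration.integrable_diff[OF finite_mean finite_measure.integrable_const[OF prob_space.finite_measure[OF Vprob]]] by simp
  then show ?thesis using that by (intro integrable_real_mult_indicator) auto
qed

lemma P_eq: "b > L \<Longrightarrow> P b = (\<integral>v. (v - b) * indicator (S b) v \<partial>V)"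
  by (simp add: alice_payoff_def S_def)

lemma bob_opt: "0 \<le> v \<Longrightarrow> bob_payoff G L v c \<le> bob_payoff G L v (\<beta> v)"
  using eq by (auto simp: is_equilibrium_def)

lemma AE_best: "AE b in G. best b"
  using eq by (auto simp: is_equilibrium_def best_def)

lemma ex_best: "measure G A > 0 \<Longrightarrow> A \<in> sets borel \<Longrightarrow> \<exists>b\<in>A. best b"
proof (rule ccontr)
  assume "measure G A > 0" "A \<in> sets borel" "\<not> (\<exists>b\<in>A. best b)"
  then have "AE b in G. b \<notin> A" using AE_best by (auto elim: AE_mp)
  then have "A \<in> null_sets G" using \<open>A \<in> sets borel\<close> AE_iff_null_sets[of A G] G_sets by auto
  then show False using \<open>measure G A > 0\<close> by (simp add: measure_def null_setsD1)
qed

definition "pstar = P (SOME b. best b)"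

lemma pstar: "P b \<le> pstar" "best b \<Longrightarrow> P b = pstar"
proof -
  have "space G = UNIV" using sets_eq_imp_space_eq[OF G_sets] by simp
  then have "\<exists>b. best b" using ex_best[of UNIV] prob_space.prob_space[OF Gprob] by auto
  then have "best (SOME b. best b)" by (rule someI_ex)
  then show "P b \<le> pstar" "best b \<Longrightarrow> P b = pstar" unfolding pstar_def best_def
    by (auto intro: order.antisym)
qed

lemma pstar_nonneg: "0 \<le> pstar" using pstar(1)[of L] by (simp add: alice_payoff_def)

lemma f_ennreal_meas[measurable]: "(\<lambda>v. ennreal (f v)) \<in> borel_measurable borel"
  using f_meas by measurable

lemma AE_V: "AE v in lborel. 0 < f v \<longrightarrow> Q v \<Longrightarrow> AE v in V. Q v"
  unfolding val_dist_def by (subst AE_density) (auto elim: AE_mp)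

lemma AE_V_pt: "AE v in V. 0 \<le> v \<and> v \<noteq> c"
  apply (rule AE_V)
  apply (rule AE_mp[OF AE_lborel_singleton[of c]])
  apply (rule AE_I2)
  using f_supp_neg by (metis less_irrefl not_le)

lemma V_pos: assumes "0 < x" shows "0 < measure V {0<..<x}"
proof -
  have fm: "finite_measure V" using Vprob by (rule prob_space.finite_measure)
  have "emeasure V {0<..<x} \<noteq> 0"
  proof
    assume "emeasure V {0<..<x} = 0"
    then have "AE v in V. v \<notin> {0<..<x}" using AE_iff_null_sets[of "{0<..<x}" V] null_setsI by auto
    then have "AE v in lborel. 0 < f v \<longrightarrow> v \<notin> {0<..<x}" unfolding val_dist_def
      by (subst (asm) AE_density) auto
    then have "AE v in lborel. v \<notin> {0<..<x}" using f_supp_pos by (auto elim: AE_mp)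
    then have "emeasure lborel {0<..<x} = 0" using AE_iff_null_sets[of "{0<..<x}" lborel] by (auto simp: null_sets_def)
    then show False using assms by simp
  qed
  then show ?thesis using fm by (simp add: finite_measure.emeasure_eq_measure zero_less_measure_iff)
qed

lemma dct:
  fixes bs :: "nat \<Rightarrow> real"
  assumes lim: "bs \<longlonglongrightarrow> b" and gt: "\<And>n. bs n > L" and A: "A \<in> sets borel"
    and ind: "\<And>v. (\<lambda>n. indicator (S (bs n)) v :: real) \<longlonglongrightarrow> indicator A v"
  shows "(\<lambda>n. P (bs n)) \<longlonglongrightarrow> (\<integral>v. (v - b) * indicator A v \<partial>V)"
proof -
  have "Bseq bs" using lim convergent_imp_Bseq convergent_def by blast
  then obtain K where K: "\<forall>n. norm (bs n) \<le> K" by (rule BseqE) blast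
  have fm: "finite_measure V" using Vprob by (rule prob_space.finite_measure)
  have w: "integrable V (\<lambda>v. abs v + K)"
    by (intro Bochner_Integration.integrable_add integrable_abs finite_mean finite_measure.integrable_const[OF fm])
  have "(\<lambda>n. (\<integral>v. (v - bs n) * indicator (S (bs n)) v \<partial>V)) \<longlonglongrightarrow> (\<integral>v. (v - b) * indicator A v \<partial>V)"
  proof (rule integral_dominated_convergence[OF _ _ w])
    show "(\<lambda>v. (v - b) * indicator A v) \<in> borel_measurable V" using A by measurable
    show "(\<lambda>v. (v - bs n) * indicator (S (bs n)) v) \<in> borel_measurable V" for n by measurable
    show "AE v in V. (\<lambda>n. (v - bs n) * indicator (S (bs n)) v) \<longlonglongrightarrow> (v - b) * indicator A v"
      by (intro AE_I2 tendsto_intros lim ind)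
    show "AE v in V. norm ((v - bs n) * indicator (S (bs n)) v) \<le> \<bar>v\<bar> + K" for n
      using K[rule_format, of n] by (intro AE_I2) (auto simp: indicator_def)
  qed
  then show ?thesis using gt by (simp add: P_eq)
qed

lemma Gfin: "finite_measure G" using Gprob by (rule prob_space.finite_measure)

lemma G_mono: "A \<subseteq> B \<Longrightarrow> B \<in> sets borel \<Longrightarrow> measure G A \<le> measure G B"
  using finite_measure.finite_measure_mono[OF Gfin] G_sets by metis

lemma G_Un: "A \<in> sets borel \<Longrightarrow> B \<in> sets borel \<Longrightarrow> measure G (A \<union> B) \<le> measure G A + measure G B"
  using measure_Un_le[of A G B] G_sets by metis

lemma g_mono: "c \<le> d \<Longrightarrow> g c \<le> g d"
  by (rule G_mono) auto

lemma bob_win: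
  assumes "0 \<le> v" "L \<le> c" "c < v" "0 < g c"
  shows "L \<le> \<beta> v \<and> 0 < g (\<beta> v) \<and> \<beta> v < v"
proof -
  have "0 < bob_payoff G L v c" using assms by (simp add: bob_payoff_def)
  also have "\<dots> \<le> bob_payoff G L v (\<beta> v)" using bob_opt assms(1) .
  finally have *: "0 < bob_payoff G L v (\<beta> v)" .
  then have "L \<le> \<beta> v" by (auto simp: bob_payoff_def split: if_splits)
  with * have "0 < (v - \<beta> v) * g (\<beta> v)" by (simp add: bob_payoff_def)
  then show ?thesis using \<open>L \<le> \<beta> v\<close> measure_nonneg[of G "{..\<beta> v}"]
    by (simp add: zero_less_mult_iff)
qed

lemma ex_best_seq: "(\<And>n. measure G (A n) > 0) \<Longrightarrow> (\<And>n. A n \<in> sets borel) \<Longrightarrow> \<exists>bs. \<forall>n. bs n \<in> A n \<and> best (bs n)"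
proof -
  assume "\<And>n. measure G (A n) > 0" "\<And>n. A n \<in> sets borel"
  then have "\<forall>n. \<exists>b. b \<in> A n \<and> best b" using ex_best by blast
  then show ?thesis by (rule choice)
qed

lemma seq_lim:
  fixes bs :: "nat \<Rightarrow> real"
  assumes "\<And>n. \<bar>bs n - b\<bar> \<le> 1 / real (Suc (Suc n))"
  shows "bs \<longlonglongrightarrow> b"
proof -
  have "(\<lambda>n. bs n - b) \<longlonglongrightarrow> 0"
  proof (rule LIMSEQ_norm_0)
    fix n
    have "1 / real (Suc (Suc n)) < 1 / real (Suc n)" by (simp add: frac_less2)
    then show "norm (bs n - b) < 1 / real (Suc n)" using assms[of n] by simp
  qed
  from tendsto_add[OF this tendsto_const[of b]] show ?thesis by simp
qed

lemma ind_Sp_lim: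
  fixes bs :: "nat \<Rightarrow> real"
  assumes "bs \<longlonglongrightarrow> b" "\<And>n. b < bs n"
  shows "(\<lambda>n. indicator (S (bs n)) v :: real) \<longlonglongrightarrow> indicator (Sp b) v"
proof (cases "0 \<le> v \<and> \<beta> v \<le> b")
  case True
  then have "\<And>n. v \<in> S (bs n)" "v \<in> Sp b" using assms(2) by (auto simp: S_def Sp_def intro: le_less_trans)
  then show ?thesis by simp
next
  case False
  then have nv: "v \<notin> Sp b" by (auto simp: Sp_def)
  show ?thesis
  proof (cases "0 \<le> v")
    case False then show ?thesis by (simp add: S_def Sp_def indicator_def)
  next
    case True
    with \<open>\<not> (0 \<le> v \<and> \<beta> v \<le> b)\<close> have "b < \<beta> v" by simp
    then have "eventually (\<lambda>n. bs n < \<beta> v) sequentially" using order_tendstoD(2)[OF assms(1)] by blast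
    then have "eventually (\<lambda>n. indicator (S (bs n)) v = (0::real)) sequentially"
      by eventually_elim (simp add: S_def)
    then show ?thesis using nv by (simp add: tendsto_eventually)
  qed
qed

lemma ind_S_lim:
  fixes bs :: "nat \<Rightarrow> real"
  assumes "bs \<longlonglongrightarrow> b" "\<And>n. bs n \<le> b"
  shows "(\<lambda>n. indicator (S (bs n)) v :: real) \<longlonglongrightarrow> indicator (S b) v"
proof (cases "0 \<le> v \<and> \<beta> v < b")
  case True
  then have "\<beta> v < b" by simp
  then have "eventually (\<lambda>n. \<beta> v < bs n) sequentially" using order_tendstoD(1)[OF assms(1)] by blast
  then have "eventually (\<lambda>n. indicator (S (bs n)) v = (1::real)) sequentially"
    by eventually_elim (use True in \<open>simp add: S_def\<close>)
  then show ?thesis using True by (simp add: tendsto_eventually S_def)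
next
  case False
  then have "\<And>n. v \<notin> S (bs n)" "v \<notin> S b" using assms(2) by (auto simp: S_def dest: order.strict_trans2)
  then show ?thesis by simp
qed

lemma int_nonpos: "(\<And>v. v \<in> A \<Longrightarrow> v \<le> b) \<Longrightarrow> (\<integral>v. (v - b) * indicator A v \<partial>V) \<le> 0"
proof -
  assume a: "\<And>v. v \<in> A \<Longrightarrow> v \<le> b"
  have "0 \<le> (\<integral>v. - ((v - b) * indicator A v) \<partial>V)"
    by (rule integral_nonneg_AE) (auto intro!: AE_I2 simp: indicator_def dest: a)
  then show ?thesis by simp
qed

lemma null_G: "A \<in> sets borel \<Longrightarrow> measure G A = 0 \<Longrightarrow> A \<in> null_sets G"
  using G_sets by (simp add: null_sets_def finite_measure.emeasure_eq_measure[OF Gfin])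

lemma g_supp: assumes "in_support G bA" "bA < c" shows "0 < g c"
proof -
  from assms(1) have "\<forall>e>0. 0 < measure G {bA - e<..<bA + e}" unfolding in_support_def .
  then have "0 < measure G {bA - (c - bA)<..<bA + (c - bA)}" using assms(2) by (erule_tac x="c - bA" in allE) simp
  also have "\<dots> \<le> g c" by (rule G_mono) auto
  finally show ?thesis .
qed

lemma P_le_L: "\<not> L < b \<Longrightarrow> P b = 0" by (simp add: alice_payoff_def)

lemma pstar_le0: assumes supp: "in_support G bA" shows "pstar \<le> 0"
proof (rule ccontr)
  assume "\<not> pstar \<le> 0"
  then have pp: "0 < pstar" by simp
  have "AE b in G. b \<notin> {..L}" using AE_best
  proof (rule AE_mp, intro AE_I2 impI)
    fix b assume "best b"
    then have "P b = pstar" by (rule pstar)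
    then show "b \<notin> {..L}" using pp P_le_L[of b] by auto
  qed
  then have "{..L} \<in> null_sets G" using AE_iff_null_sets[of "{..L}" G] G_sets by auto
  then have gL: "g L = 0" by (simp add: measure_def null_setsD1)
  define T where "T = {c. 0 < g c}"
  have TL: "L < c" if "c \<in> T" for c
  proof (rule ccontr)
    assume "\<not> L < c"
    then have "g c \<le> g L" by (intro g_mono) simp
    then show False using that gL by (simp add: T_def)
  qed
  have Tne: "T \<noteq> {}" using g_supp[OF supp, of "bA + 1"] by (auto simp: T_def)
  have Tbdd: "bdd_below T" using TL by (auto intro!: bdd_belowI[of _ L] less_imp_le)
  define s where "s = Inf T"
  have sL: "L \<le> s" unfolding s_def using Tne TL by (intro cInf_greatest) (auto intro: less_imp_le)
  have below: "g c = 0" if "c < s" for c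
  proof -
    have "c \<notin> T" using that cInf_lower[OF _ Tbdd, of c] by (auto simp: s_def)
    then show ?thesis using measure_nonneg[of G "{..c}"] by (auto simp: T_def)
  qed
  have above: "0 < g c" if "s < c" for c
  proof -
    have "\<exists>x\<in>T. x < c" using that cInf_less_iff[OF Tne Tbdd] s_def by auto
    then obtain x where "x \<in> T" "x < c" by blast
    then have "0 < g x" "g x \<le> g c" by (auto simp: T_def intro: g_mono)
    then show ?thesis by simp
  qed
  have bobs: "v \<le> s" if "0 \<le> v" "g (\<beta> v) = 0" for v
  proof (rule ccontr)
    assume "\<not> v \<le> s"
    then have "L \<le> (s + v) / 2" "(s + v) / 2 < v" "0 < g ((s + v) / 2)" using sL by (auto intro!: above)
    then have "0 < g (\<beta> v)" using bob_win[OF \<open>0 \<le> v\<close>] by blast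
    then show False using that by simp
  qed
  show False
  proof (cases "0 < g s")
    case True
    have "{..<s} = (\<Union>n. {..s - 1 / real (Suc n)})"
    proof (rule set_eqI, rule iffI)
      fix x assume "x \<in> {..<s}"
      then have "0 < s - x" by simp
      then obtain n where "inverse (real (Suc n)) < s - x" using reals_Archimedean[of "s - x"] by blast
      then have "x \<in> {..s - 1 / real (Suc n)}" by (simp add: field_simps)
      then show "x \<in> (\<Union>n. {..s - 1 / real (Suc n)})" by blast
    next
      fix x assume "x \<in> (\<Union>n. {..s - 1 / real (Suc n)})"
      then obtain n where "x \<le> s - 1 / real (Suc n)" by auto
      moreover have "0 < 1 / real (Suc n)" by simp
      ultimately have "x < s" by linarith
      then show "x \<in> {..<s}" by simp
    qed
    also have "\<dots> \<in> null_sets G"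
    proof (intro null_sets_UN null_G)
      fix n show "{..s - 1 / real (Suc n)} \<in> sets borel" by simp
      have "0 < 1 / real (Suc n)" by simp
      then show "g (s - 1 / real (Suc n)) = 0" by (intro below) linarith
    qed
    finally have "measure G {..<s} = 0" by (simp add: measure_def null_setsD1)
    moreover have "g s \<le> measure G {..<s} + measure G {s}"
    proof -
      have "g s = measure G ({..<s} \<union> {s})" by (rule arg_cong[where f="measure G"]) auto
      also have "\<dots> \<le> measure G {..<s} + measure G {s}" by (rule G_Un) auto
      finally show ?thesis .
    qed
    ultimately have "0 < measure G {s}" using True by simp
    then have "best s" using ex_best[of "{s}"] by simp
    then have "P s = pstar" by (rule pstar(2))
    then have "L < s" using pp P_le_L[of s] by linarith
    then have "P s = (\<integral>v. (v - s) * indicator (S s) v \<partial>V)" by (rule P_eq)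
    also have "\<dots> \<le> 0"
    proof (rule int_nonpos)
      fix v assume "v \<in> S s"
      then have "0 \<le> v" "\<beta> v < s" by (auto simp: S_def)
      then show "v \<le> s" using below[of "\<beta> v"] bobs[of v] by blast
    qed
    finally show False using \<open>P s = pstar\<close> pp by simp
  next
    case False
    then have gs: "g s = 0" using measure_nonneg[of G "{..s}"] by simp
    define A where "A n = {s<..s + 1 / real (Suc (Suc n))}" for n
    have "0 < measure G (A n)" for n
    proof -
      have "0 < g (s + 1 / real (Suc (Suc n)))" by (intro above) simp
      also have "\<dots> \<le> g s + measure G (A n)"
      proof -
        have "g (s + 1 / real (Suc (Suc n))) = measure G ({..s} \<union> A n)"
        proof (rule arg_cong[where f="measure G"])
          have "0 < 1 / real (Suc (Suc n))" by simp
          then show "{..s + 1 / real (Suc (Suc n))} = {..s} \<union> A n"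
            unfolding A_def by (subst ivl_disj_un_one(3)) simp_all
        qed
        also have "\<dots> \<le> g s + measure G (A n)" by (rule G_Un) (auto simp: A_def)
        finally show ?thesis .
      qed
      finally show ?thesis using gs by simp
    qed
    moreover have "A n \<in> sets borel" for n by (simp add: A_def)
    ultimately obtain bs where bs: "\<And>n. bs n \<in> A n" "\<And>n. best (bs n)"
      using ex_best_seq[of A] by blast
    have bgt: "s < bs n" for n using bs(1)[of n] by (simp add: A_def)
    have lim: "bs \<longlonglongrightarrow> s"
    proof (rule seq_lim)
      fix n from bs(1)[of n] show "\<bar>bs n - s\<bar> \<le> 1 / real (Suc (Suc n))"
        unfolding A_def by (simp del: of_nat_Suc)
    qed
    have l1: "(\<lambda>n. P (bs n)) \<longlonglongrightarrow> (\<integral>v. (v - s) * indicator (Sp s) v \<partial>V)"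
    proof (rule dct[OF lim])
      fix n show "L < bs n" using sL bgt[of n] by linarith
    next
      show "Sp s \<in> sets borel" by (rule Sp_meas)
    next
      fix v show "(\<lambda>n. indicator (S (bs n)) v :: real) \<longlonglongrightarrow> indicator (Sp s) v"
        by (rule ind_Sp_lim[OF lim bgt])
    qed
    have "(\<lambda>n. P (bs n)) = (\<lambda>n. pstar)" using bs(2) pstar(2) by presburger
    then have l2: "(\<lambda>n. P (bs n)) \<longlonglongrightarrow> pstar" by simp
    have "pstar = (\<integral>v. (v - s) * indicator (Sp s) v \<partial>V)" using LIMSEQ_unique[OF l2 l1] .
    also have "\<dots> \<le> 0"
    proof (rule int_nonpos)
      fix v assume "v \<in> Sp s"
      then have "0 \<le> v" "g (\<beta> v) \<le> g s" by (auto simp: Sp_def intro: g_mono)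
      then show "v \<le> s" using bobs gs measure_nonneg[of G "{..\<beta> v}"] by auto
    qed
    finally show False using pp by simp
  qed
qed

lemma pstar0: "in_support G bA \<Longrightarrow> pstar = 0"
  using pstar_le0 pstar_nonneg by (meson order.antisym)

lemma G_split_le: "L' \<le> M' \<Longrightarrow> M' \<le> R \<Longrightarrow> measure G {L'<..R} \<le> measure G {L'<..M'} + measure G {M'<..R}"
proof -
  assume "L' \<le> M'" "M' \<le> R"
  then have "{L'<..R} = {L'<..M'} \<union> {M'<..R}" by auto
  then show ?thesis using G_Un[of "{L'<..M'}" "{M'<..R}"] by simp
qed

lemma right_case:
  assumes supp: "in_support G bA" and bA: "L < bA" and e: "0 < e" "L < bA - e"
    and null: "measure G {bA - e<..bA} = 0"
  shows "\<And>v. 0 \<le> v \<Longrightarrow> \<beta> v = bA \<Longrightarrow> v \<le> bA"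
    and "pstar = (\<integral>v. (v - bA) * indicator (Sp bA) v \<partial>V)"
proof -
  fix v assume v: "0 \<le> v" "\<beta> v = bA"
  have gbA: "g bA = 0"
  proof (rule ccontr)
    assume "g bA \<noteq> 0"
    then have gpos: "0 < g bA" using measure_nonneg[of G "{..bA}"] by linarith
    define c where "c = bA - e / 2"
    have "c \<le> bA" "L \<le> c" "c < bA" using e by (auto simp: c_def)
    have "g bA = measure G ({..c} \<union> {c<..bA})"
      using \<open>c \<le> bA\<close> by (intro arg_cong[where f="measure G"]) auto
    also have "\<dots> \<le> g c + measure G {c<..bA}" by (rule G_Un) auto
    also have "measure G {c<..bA} \<le> measure G {bA - e<..bA}" by (rule G_mono) (auto simp: c_def)
    finally have "g bA \<le> g c" using null by simp
    moreover have "g c \<le> g bA" using \<open>c \<le> bA\<close> by (rule g_mono)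
    ultimately have gc: "g c = g bA" by simp
    have "bob_payoff G L v c \<le> bob_payoff G L v (\<beta> v)" using bob_opt v(1) .
    then have "(v - c) * g bA \<le> (v - bA) * g bA" using v(2) gc \<open>L \<le> c\<close> bA
      by (simp add: bob_payoff_def)
    then have "v - c \<le> v - bA" using gpos by simp
    then show False using \<open>c < bA\<close> by simp
  qed
  show "v \<le> bA"
  proof (rule ccontr)
    assume "\<not> v \<le> bA"
    then have "L \<le> (bA + v) / 2" "(bA + v) / 2 < v" "0 < g ((bA + v) / 2)"
      using bA by (auto intro!: g_supp[OF supp])
    then have "0 < g (\<beta> v)" using bob_win[OF v(1)] by blast
    then show False using gbA v(2) by simp
  qed
next
  define d where "d n = min e (1 / real (Suc (Suc n)))" for n
  have dpos: "0 < d n" for n using e by (simp add: d_def)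
  define A where "A n = {bA<..bA + d n}" for n
  have "0 < measure G (A n)" for n
  proof -
    have "0 < measure G {bA - d n<..<bA + d n}" using supp dpos[of n] unfolding in_support_def by blast
    also have "\<dots> \<le> measure G {bA - d n<..bA + d n}" by (rule G_mono) auto
    also have "\<dots> \<le> measure G {bA - d n<..bA} + measure G (A n)"
      unfolding A_def using dpos[of n] by (intro G_split_le) auto
    also have "measure G {bA - d n<..bA} \<le> measure G {bA - e<..bA}"
      by (rule G_mono) (auto simp: d_def)
    finally show ?thesis using null by simp
  qed
  moreover have "A n \<in> sets borel" for n by (simp add: A_def)
  ultimately obtain bs where bs: "\<And>n. bs n \<in> A n" "\<And>n. best (bs n)"
    using ex_best_seq[of A] by blast
  have bgt: "bA < bs n" for n using bs(1)[of n] by (simp add: A_def)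
  have lim: "bs \<longlonglongrightarrow> bA"
  proof (rule seq_lim)
    fix n from bs(1)[of n] have "bA < bs n" "bs n \<le> bA + d n" by (auto simp: A_def)
    moreover have "d n \<le> 1 / real (Suc (Suc n))" by (simp add: d_def del: of_nat_Suc)
    ultimately show "\<bar>bs n - bA\<bar> \<le> 1 / real (Suc (Suc n))" by linarith
  qed
  have l1: "(\<lambda>n. P (bs n)) \<longlonglongrightarrow> (\<integral>v. (v - bA) * indicator (Sp bA) v \<partial>V)"
  proof (rule dct[OF lim])
    fix n show "L < bs n" using bA bgt[of n] by linarith
  next
    show "Sp bA \<in> sets borel" by (rule Sp_meas)
  next
    fix v show "(\<lambda>n. indicator (S (bs n)) v :: real) \<longlonglongrightarrow> indicator (Sp bA) v"
      by (rule ind_Sp_lim[OF lim bgt])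
  qed
  have "(\<lambda>n. P (bs n)) = (\<lambda>n. pstar)" using bs(2) pstar(2) by presburger
  then have l2: "(\<lambda>n. P (bs n)) \<longlonglongrightarrow> pstar" by simp
  show "pstar = (\<integral>v. (v - bA) * indicator (Sp bA) v \<partial>V)" using LIMSEQ_unique[OF l2 l1] .
qed

lemma P_bA:
  assumes supp: "in_support G bA" and bA: "L < bA"
  shows "P bA = pstar"
proof (cases "\<exists>e>0. measure G {bA - e<..bA} = 0")
  case True
  then obtain e0 where e0: "0 < e0" "measure G {bA - e0<..bA} = 0" by blast
  define e where "e = min e0 ((bA - L) / 2)"
  have "e \<le> (bA - L) / 2" unfolding e_def by (rule min.cobounded2)
  then have e: "0 < e" "L < bA - e" using e0 bA by (auto simp: e_def)
  have "measure G {bA - e<..bA} \<le> measure G {bA - e0<..bA}" by (rule G_mono) (auto simp: e_def)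
  then have null: "measure G {bA - e<..bA} = 0" using e0 measure_nonneg[of G "{bA - e<..bA}"] by linarith
  note rc = right_case[OF supp bA e null]
  have "pstar = (\<integral>v. (v - bA) * indicator (Sp bA) v \<partial>V)" by (rule rc(2))
  also have "\<dots> \<le> (\<integral>v. (v - bA) * indicator (S bA) v \<partial>V)"
  proof (rule integral_mono[OF int_lin int_lin])
    fix v show "(v - bA) * indicator (Sp bA) v \<le> (v - bA) * indicator (S bA) v"
    proof (cases "v \<in> Sp bA \<and> v \<notin> S bA")
      case True
      then have "0 \<le> v" "\<beta> v = bA" by (auto simp: S_def Sp_def)
      then have "v \<le> bA" by (rule rc(1))
      then show ?thesis using True by simp
    next
      case False
      moreover have "S bA \<subseteq> Sp bA" by (auto simp: S_def Sp_def)
      ultimately show ?thesis by (auto simp: indicator_def)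
    qed
  qed simp_all
  also have "\<dots> = P bA" using P_eq[OF bA] by simp
  finally show ?thesis using pstar(1)[of bA] by simp
next
  case False
  then have pos: "0 < measure G {bA - e<..bA}" if "0 < e" for e
  proof -
    have "measure G {bA - e<..bA} \<noteq> 0" using False that by blast
    then show ?thesis using measure_nonneg[of G "{bA - e<..bA}"] by linarith
  qed
  define d where "d n = min ((bA - L) / 2) (1 / real (Suc (Suc n)))" for n
  have dpos: "0 < d n" for n using bA by (simp add: d_def)
  define A where "A n = {bA - d n<..bA}" for n
  have "0 < measure G (A n)" for n unfolding A_def by (rule pos[OF dpos])
  moreover have "A n \<in> sets borel" for n by (simp add: A_def)
  ultimately obtain bs where bs: "\<And>n. bs n \<in> A n" "\<And>n. best (bs n)"
    using ex_best_seq[of A] by blast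
  have ble: "bs n \<le> bA" for n using bs(1)[of n] by (simp add: A_def)
  have bgtL: "L < bs n" for n
  proof -
    have "bA - d n < bs n" using bs(1)[of n] by (simp add: A_def)
    moreover have "d n \<le> (bA - L) / 2" unfolding d_def by (rule min.cobounded1)
    moreover have "\<And>x y. bA - x < y \<Longrightarrow> x \<le> (bA - L) / 2 \<Longrightarrow> L < y" using bA by (simp add: field_simps)
    ultimately show ?thesis by blast
  qed
  have lim: "bs \<longlonglongrightarrow> bA"
  proof (rule seq_lim)
    fix n from bs(1)[of n] have "bA - d n < bs n" "bs n \<le> bA" by (auto simp: A_def)
    moreover have "d n \<le> 1 / real (Suc (Suc n))" by (simp add: d_def del: of_nat_Suc)
    ultimately show "\<bar>bs n - bA\<bar> \<le> 1 / real (Suc (Suc n))" by linarith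
  qed
  have l1: "(\<lambda>n. P (bs n)) \<longlonglongrightarrow> (\<integral>v. (v - bA) * indicator (S bA) v \<partial>V)"
  proof (rule dct[OF lim])
    fix n show "L < bs n" by (rule bgtL)
  next
    show "S bA \<in> sets borel" by (rule S_meas)
  next
    fix v show "(\<lambda>n. indicator (S (bs n)) v :: real) \<longlonglongrightarrow> indicator (S bA) v"
      by (rule ind_S_lim[OF lim ble])
  qed
  have "(\<lambda>n. P (bs n)) = (\<lambda>n. pstar)" using bs(2) pstar(2) by presburger
  then have l2: "(\<lambda>n. P (bs n)) \<longlonglongrightarrow> pstar" by simp
  have "pstar = (\<integral>v. (v - bA) * indicator (S bA) v \<partial>V)" using LIMSEQ_unique[OF l2 l1] .
  then show ?thesis using P_eq[OF bA] by simp
qed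

lemma Vfin: "finite_measure V" using Vprob by (rule prob_space.finite_measure)

lemma int_ci: "A \<in> sets borel \<Longrightarrow> integrable V (\<lambda>v. c * indicator A v :: real)"
  by (intro integrable_real_mult_indicator finite_measure.integrable_const[OF Vfin]) auto

lemma int_vi: "A \<in> sets borel \<Longrightarrow> integrable V (\<lambda>v. v * indicator A v :: real)"
  by (intro integrable_real_mult_indicator finite_mean) auto

lemma int_ci_eq: "A \<in> sets borel \<Longrightarrow> (\<integral>v. c * indicator A v \<partial>V) = c * measure V A"
  by simp

lemma S_pos:
  assumes supp: "in_support G bA" and bA: "L < bA"
  shows "0 < measure V (S bA)"
proof (rule ccontr)
  assume "\<not> 0 < measure V (S bA)"
  then have m0: "measure V (S bA) = 0" using measure_nonneg[of V "S bA"] by linarith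
  have S0: "v \<le> 0" if "v \<in> S bA" for v
  proof (rule ccontr)
    assume "\<not> v \<le> 0"
    then have vpos: "0 < v" by simp
    have "{0<..<v} \<subseteq> S bA"
    proof
      fix w assume w: "w \<in> {0<..<v}"
      then have "\<beta> w \<le> \<beta> v" using \<beta>_mono vpos by (intro mono_onD[OF \<beta>_mono]) auto
      then show "w \<in> S bA" using that w by (auto simp: S_def)
    qed
    then have "measure V {0<..<v} \<le> measure V (S bA)"
      by (intro finite_measure.finite_measure_mono[OF Vfin]) auto
    then show False using V_pos[OF vpos] m0 by simp
  qed
  have ge: "bA \<le> \<beta> v" if "0 < v" for v
  proof -
    have "v \<notin> S bA" using S0 that by force
    then show ?thesis using that by (auto simp: S_def)
  qed
  have bApos: "0 < bA" using bA L_nonneg by simp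
  have mid: "\<beta> v = bA \<and> g bA = 0" if "0 < v" "v < bA" for v
  proof -
    have b1: "bA \<le> \<beta> v" using ge that by simp
    have "bob_payoff G L v (L - 1) \<le> bob_payoff G L v (\<beta> v)" using bob_opt that by simp
    then have "0 \<le> (v - \<beta> v) * g (\<beta> v)" using b1 bA by (simp add: bob_payoff_def)
    moreover have "v - \<beta> v < 0" using b1 that by simp
    ultimately have "g (\<beta> v) \<le> 0" by (simp add: zero_le_mult_iff)
    then have gz: "g (\<beta> v) = 0" using measure_nonneg[of G "{..\<beta> v}"] by linarith
    have "\<not> bA < \<beta> v" using g_supp[OF supp, of "\<beta> v"] gz by auto
    then have "\<beta> v = bA" using b1 by simp
    then show ?thesis using gz by simp
  qed
  have gbA: "g bA = 0" using mid[of "bA / 2"] bApos by simp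
  define e where "e = (bA - L) / 2"
  have e: "0 < e" "L < bA - e" using bA by (auto simp: e_def field_simps)
  have "measure G {bA - e<..bA} \<le> g bA" by (rule G_mono) auto
  then have null: "measure G {bA - e<..bA} = 0" using gbA measure_nonneg[of G "{bA - e<..bA}"] by linarith
  note rc = right_case[OF supp bA e null]
  have "pstar = (\<integral>v. (v - bA) * indicator (Sp bA) v \<partial>V)" by (rule rc(2))
  also have "\<dots> \<le> (\<integral>v. (- (bA / 2)) * indicator {0<..<bA / 2} v \<partial>V)"
  proof (rule integral_mono[OF int_lin int_ci])
    fix v show "(v - bA) * indicator (Sp bA) v \<le> (- (bA / 2)) * indicator {0<..<bA / 2} v"
    proof (cases "v \<in> Sp bA")
      case True
      then have v0: "0 \<le> v" "\<beta> v \<le> bA" by (auto simp: Sp_def)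
      show ?thesis
      proof (cases "v = 0")
        case True then show ?thesis using \<open>v \<in> Sp bA\<close> bApos by simp
      next
        case False
        then have "0 < v" using v0 by simp
        then have "\<beta> v = bA" using ge v0 by force
        then have "v \<le> bA" using rc(1) v0 by blast
        then show ?thesis using \<open>v \<in> Sp bA\<close> \<open>0 < v\<close> by (auto simp: indicator_def)
      qed
    next
      case False
      have "v \<notin> {0<..<bA / 2}"
      proof
        assume "v \<in> {0<..<bA / 2}"
        then have "\<beta> v = bA" "0 \<le> v" using mid[of v] by auto
        then show False using False by (simp add: Sp_def)
      qed
      then show ?thesis using False by simp
    qed
  qed simp_all
  also have "\<dots> = - (bA / 2) * measure V {0<..<bA / 2}" by (rule int_ci_eq) simp
  also have "\<dots> < 0" using V_pos[of "bA / 2"] bApos by (simp add: mult_pos_pos)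
  finally show False using pstar0[OF supp] by simp
qed

lemma main:
  assumes supp: "in_support G bA" and bA: "L < bA"
  shows "bA = cond_mean_below V (pinv \<beta> bA)"
proof -
  define t where "t = pinv \<beta> bA"
  define Z where "Z = {ereal v | v. 0 \<le> v \<and> \<beta> v \<ge> bA}"
  have t_def': "t = Inf Z" by (simp add: t_def Z_def pinv_def)
  have Tm: "{v. ereal v < t} \<in> sets borel" by measurable
  have AE: "AE v in V. (v \<in> {v. ereal v < t}) \<longleftrightarrow> v \<in> S bA"
    using AE_V_pt[of "real_of_ereal t"]
  proof (rule AE_mp, intro AE_I2 impI)
    fix v assume v: "0 \<le> v \<and> v \<noteq> real_of_ereal t"
    show "(v \<in> {v. ereal v < t}) \<longleftrightarrow> v \<in> S bA"
    proof
      assume "v \<in> {v. ereal v < t}"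
      then have lt: "ereal v < t" by simp
      show "v \<in> S bA"
      proof (rule ccontr)
        assume "v \<notin> S bA"
        then have "ereal v \<in> Z" using v by (auto simp: S_def Z_def)
        then have "t \<le> ereal v" unfolding t_def' by (rule Inf_lower)
        then show False using lt by simp
      qed
    next
      assume vS: "v \<in> S bA"
      show "v \<in> {v. ereal v < t}"
      proof (rule ccontr)
        assume "v \<notin> {v. ereal v < t}"
        then have "t \<le> ereal v" by (simp add: not_less)
        moreover have "t \<noteq> ereal v" using v by auto
        ultimately have "Inf Z < ereal v" unfolding t_def' by simp
        then obtain z where "z \<in> Z" "z < ereal v" using Inf_less_iff by blast
        then obtain w where w: "z = ereal w" "0 \<le> w" "bA \<le> \<beta> w" by (auto simp: Z_def)
        then have "w \<le> v" using \<open>z < ereal v\<close> by simp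
        then have "\<beta> w \<le> \<beta> v" using v w by (intro mono_onD[OF \<beta>_mono]) auto
        then show False using vS w by (auto simp: S_def)
      qed
    qed
  qed
  have AE2: "AE v in V. v * indicator {v. ereal v < t} v = v * indicator (S bA) v"
    using AE by (rule AE_mp) (intro AE_I2, simp add: indicator_def)
  have I: "(\<integral>v. v * indicator {v. ereal v < t} v \<partial>V) = (\<integral>v. v * indicator (S bA) v \<partial>V)"
    using Tm by (intro integral_cong_AE AE2) measurable
  have M: "measure V {v. ereal v < t} = measure V (S bA)"
    using Tm by (intro measure_eq_AE AE) auto
  have "0 = P bA" using P_bA[OF supp bA] pstar0[OF supp] by simp
  also have "\<dots> = (\<integral>v. v * indicator (S bA) v - bA * indicator (S bA) v \<partial>V)"
    using P_eq[OF bA] by (simp add: algebra_simps)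
  also have "\<dots> = (\<integral>v. v * indicator (S bA) v \<partial>V) - bA * measure V (S bA)"
    by (subst Bochner_Integration.integral_diff[OF int_vi int_ci]) simp_all
  finally have "(\<integral>v. v * indicator (S bA) v \<partial>V) = bA * measure V (S bA)" by simp
  then show ?thesis using S_pos[OF supp bA] I M
    by (simp add: cond_mean_below_def t_def)
qed

end

theorem lemma3:
  fixes f :: "real \<Rightarrow> real" and L :: real and \<beta> :: "real \<Rightarrow> real"
    and G :: "real measure" and bA :: real
  assumes f_meas: "f \<in> borel_measurable borel"
    and f_nonneg: "\<forall>v. 0 \<le> f v"
    and f_prob: "prob_space (val_dist f)"
    and f_supp_neg: "\<forall>v<0. f v = 0"
    and f_supp_pos: "\<forall>v>0. 0 < f v"
    and finite_mean: "integrable (val_dist f) (\<lambda>v. v)"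
    and L_nonneg: "0 \<le> L"
    and mean_gt_L: "(\<integral>v. v \<partial>val_dist f) > L"
    and G_prob: "prob_space G"
    and G_sets: "sets G = sets borel"
    and \<beta>_mono: "mono_on {0..} \<beta>"
    and eq: "is_equilibrium (val_dist f) G L \<beta>"
    and bA_supp: "in_support G bA"
    and bA_gt: "bA > L"
  shows "bA = cond_mean_below (val_dist f) (pinv \<beta> bA)"
proof -
  interpret auc f L \<beta> G
    by (rule auc.intro[OF f_meas f_nonneg f_prob f_supp_neg f_supp_pos finite_mean L_nonneg G_prob G_sets \<beta>_mono eq])
  show ?thesis using main[OF bA_supp bA_gt] .
qed

end
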